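(* Let $P\subseteq[0,k]^n$ be a lattice polytope, let $\sigma:[n]\to\pm[n]$ be a signed permutation, let $\alpha\ge 2k+1$ and $\mathbf{x}_\sigma=(\operatorname{sign}(\sigma(1))\alpha^{|\sigma(1)|},\dots,\operatorname{sign}(\sigma(n))\alpha^{|\sigma(n)|})$. Define a flag of faces $G_n\supseteq G_{n-1}\supseteq\dots\supseteq G_0$ by $G_n=P$ and, for $i=n,\dots,1$, $G_{i-1}$ is the face of $G_i$ on which $\mathbf{e}_{\sigma^{-1}(i)}^{\intercal}\mathbf{x}$ is maximized. Then $G_0$ is a single vertex, and it is the unique vertex of $P$ maximizing $\mathbf{x}_\sigma^{\intercal}\mathbf{x}$.
   Context: A signed permutation $\sigma:[n]\to\pm[n]$ is a map such that $i\mapsto|\sigma(i)|$ is a permutation of $[n]$. For $j\in[n]$, $\sigma^{-1}(j)$ denotes the signed index $\operatorname{sign}(\sigma(i))\,i$ where $|\sigma(i)|=j$, and $\mathbf{e}_{-i}:=-\mathbf{e}_i$, with $\mathbf{e}_i$ the standard basis vectors. A lattice polytope has integer vertices. *)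

theory Defs
  imports "HOL-Analysis.Analysis"
begin

text \<open>The coordinate set [n] is the finite index type 'n (n = CARD('n)).
  A signed permutation is a map sigma from indices to nonzero integers such that
  i |-> |sigma i| is a bijection onto {1..n}.\<close>
definition signed_perm :: "('n::finite \<Rightarrow> int) \<Rightarrow> bool" where
  "signed_perm \<sigma> \<longleftrightarrow> bij_betw (\<lambda>i. nat \<bar>\<sigma> i\<bar>) UNIV {1..CARD('n)}"

text \<open>e_{sigma^{-1}(j)} = sign(sigma i) e_i where |sigma i| = j.\<close>
definition signed_inv_basis :: "('n::finite \<Rightarrow> int) \<Rightarrow> nat \<Rightarrow> real^'n" where
  "signed_inv_basis \<sigma> j =
     (let i = (THE i. nat \<bar>\<sigma> i\<bar> = j) in of_int (sgn (\<sigma> i)) *\<^sub>R axis i 1)"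

definition x_sigma :: "real \<Rightarrow> ('n::finite \<Rightarrow> int) \<Rightarrow> real^'n" where
  "x_sigma \<alpha> \<sigma> = (\<chi> i. of_int (sgn (\<sigma> i)) * \<alpha> ^ nat \<bar>\<sigma> i\<bar>)"

definition max_face :: "(real^'n::finite) set \<Rightarrow> real^'n \<Rightarrow> (real^'n) set" where
  "max_face S c = {x \<in> S. \<forall>y\<in>S. c \<bullet> y \<le> c \<bullet> x}"

definition lattice_polytope :: "(real^'n::finite) set \<Rightarrow> bool" where
  "lattice_polytope P \<longleftrightarrow> polytope P \<and>
     (\<forall>v. v extreme_point_of P \<longrightarrow> (\<forall>i. v $ i \<in> \<int>))"

end

theory Submission
  imports Defs
begin

lemma sib_inner:
  assumes "signed_perm \<sigma>"
  shows "signed_inv_basis \<sigma> (nat \<bar>\<sigma> i\<bar>) \<bullet> x = of_int (sgn (\<sigma> i)) * x $ i"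
proof -
  have inj: "inj (\<lambda>i. nat \<bar>\<sigma> i\<bar>)" using assms unfolding signed_perm_def bij_betw_def by auto
  have "(THE i'. nat \<bar>\<sigma> i'\<bar> = nat \<bar>\<sigma> i\<bar>) = i"
    by (rule the_equality) (auto dest: injD[OF inj])
  thus ?thesis by (simp add: signed_inv_basis_def Let_def inner_axis')
qed

lemma geom_bound:
  fixes \<alpha> k :: real
  assumes "k \<ge> 0" "\<alpha> \<ge> 2*k+1"
  shows "k * (\<Sum>l\<in>{1..<j}. \<alpha>^l) < \<alpha>^j"
proof (induction j)
  case 0 then show ?case by simp
next
  case (Suc j)
  have a1: "\<alpha> \<ge> 1+k" using assms by linarith
  have pos: "\<alpha>^j > 0" using a1 assms(1) by simp
  have "k * (\<Sum>l\<in>{1..<Suc j}. \<alpha>^l) \<le> k * (\<Sum>l\<in>{1..<j}. \<alpha>^l) + k * \<alpha>^j"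
    using assms(1) pos by (cases "j = 0") (auto simp: algebra_simps)
  also have "\<dots> < \<alpha>^j + k*\<alpha>^j" using Suc by simp
  also have "\<dots> = (1+k) * \<alpha>^j" by (simp add: algebra_simps)
  also have "\<dots> \<le> \<alpha> * \<alpha>^j" using a1 pos by (intro mult_right_mono) auto
  finally show ?case by simp
qed

lemma lex_pos:
  fixes g :: "nat \<Rightarrow> real" and \<alpha> k :: real
  assumes "k \<ge> 0" "\<alpha> \<ge> 2*k+1" "1 \<le> j" "j \<le> n" "g j \<ge> 1"
    "\<forall>l\<in>{1..<j}. \<bar>g l\<bar> \<le> k" "\<forall>l\<in>{j<..n}. g l = 0"
  shows "(\<Sum>l=1..n. \<alpha>^l * g l) > 0"
proof -
  have apos: "\<alpha> > 0" using assms by linarith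
  have split: "{1..n} = {1..<j} \<union> ({j} \<union> {j<..n})" using assms(3,4) by auto
  have "(\<Sum>l=1..n. \<alpha>^l * g l) = (\<Sum>l\<in>{1..<j}. \<alpha>^l * g l) + (\<alpha>^j * g j + (\<Sum>l\<in>{j<..n}. \<alpha>^l * g l))"
    unfolding split by (subst sum.union_disjoint; auto)
  also have "(\<Sum>l\<in>{j<..n}. \<alpha>^l * g l) = 0" using assms(7) by simp
  also have "(\<Sum>l\<in>{1..<j}. \<alpha>^l * g l) \<ge> (\<Sum>l\<in>{1..<j}. - (k * \<alpha>^l))"
  proof (rule sum_mono)
    fix l assume "l \<in> {1..<j}"
    then have "\<bar>g l\<bar> \<le> k" using assms(6) by auto
    moreover have "\<alpha>^l > 0" using apos by simp
    ultimately have "\<alpha>^l * (-k) \<le> \<alpha>^l * g l" by (intro mult_left_mono) auto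
    thus "- (k * \<alpha>^l) \<le> \<alpha>^l * g l" by (simp add: algebra_simps)
  qed
  moreover have "(\<Sum>l\<in>{1..<j}. - (k * \<alpha>^l)) = - (k * (\<Sum>l\<in>{1..<j}. \<alpha>^l))"
    by (simp add: sum_negf sum_distrib_left)
  moreover have "k * (\<Sum>l\<in>{1..<j}. \<alpha>^l) < \<alpha>^j" using geom_bound assms by blast
  moreover have "\<alpha>^j * g j \<ge> \<alpha>^j" using assms(5) apos by simp
  ultimately show ?thesis by linarith
qed

theorem mainTheorem10:
  fixes P :: "(real^'n) set" and k \<alpha> :: real and \<sigma> :: "'n \<Rightarrow> int"
    and G :: "nat \<Rightarrow> (real^'n) set"
  assumes "lattice_polytope P" and "P \<noteq> {}"
    and "\<forall>x\<in>P. \<forall>i. 0 \<le> x $ i \<and> x $ i \<le> k"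
    and "signed_perm \<sigma>"
    and "\<alpha> \<ge> 2 * k + 1"
    and "G CARD('n) = P"
    and "\<forall>i\<in>{1..CARD('n)}. G (i - 1) = max_face (G i) (signed_inv_basis \<sigma> i)"
  shows "\<exists>v. G 0 = {v} \<and> v extreme_point_of P \<and>
           {w. w extreme_point_of P \<and>
               (\<forall>u. u extreme_point_of P \<longrightarrow> x_sigma \<alpha> \<sigma> \<bullet> u \<le> x_sigma \<alpha> \<sigma> \<bullet> w)} = {v}"
proof -
  define n where "n = CARD('n)"
  define f where "f = (\<lambda>i. nat \<bar>\<sigma> i\<bar>)"
  define e where "e = signed_inv_basis \<sigma>"
  have bij: "bij_betw f UNIV {1..n}" using assms(4) by (simp add: signed_perm_def f_def n_def)
  have einner: "\<And>i x. e (f i) \<bullet> x = of_int (sgn (\<sigma> i)) * x $ i"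
    using sib_inner[OF assms(4)] by (simp add: e_def f_def)
  have fi: "\<And>i. f i \<in> {1..n}" using bij by (auto simp: bij_betw_def)
  have snz: "\<And>i. \<sigma> i \<noteq> 0"
  proof
    fix i assume "\<sigma> i = 0"
    hence "f i = 0" by (simp add: f_def)
    thus False using fi[of i] by simp
  qed
  have sabs: "\<And>i. \<bar>of_int (sgn (\<sigma> i)) :: real\<bar> = 1" using snz by (simp add: sgn_if)
  have surjf: "\<And>j. j \<in> {1..n} \<Longrightarrow> \<exists>i. f i = j" using bij unfolding bij_betw_def by (metis rangeE)
  have G7: "\<And>i. i \<in> {1..n} \<Longrightarrow> G (i - 1) = max_face (G i) (e i)"
    using assms(7) by (simp add: n_def e_def)
  have convP: "convex P" "compact P" using assms(1) polytope_imp_convex polytope_imp_compact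
    by (auto simp: lattice_polytope_def)
  have faces: "\<forall>d\<le>n. G (n-d) face_of P \<and> G (n-d) \<noteq> {}"
  proof (intro allI impI)
    fix d assume "d \<le> n" thus "G (n-d) face_of P \<and> G (n-d) \<noteq> {}"
    proof (induction d)
      case 0 thus ?case using assms(2,6) face_of_refl convP by (simp add: n_def)
    next
      case (Suc d)
      define m where "m = n - d"
      have m1: "m \<in> {1..n}" using Suc.prems by (auto simp: m_def)
      have IH: "G m face_of P" "G m \<noteq> {}" using Suc by (auto simp: m_def)
      have Gm: "G (m-1) = max_face (G m) (e m)" using G7 m1 by simp
      have cvx: "convex (G m)" using IH face_of_imp_convex by blast
      have cpt: "compact (G m)" using IH face_of_imp_compact convP by blast
      obtain x0 where x0: "x0 \<in> G m" "\<forall>y\<in>G m. e m \<bullet> y \<le> e m \<bullet> x0"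
        using continuous_attains_sup[OF cpt IH(2), of "\<lambda>y. e m \<bullet> y"]
        using continuous_on_inner[OF continuous_on_const continuous_on_id] by fastforce
      have eq: "max_face (G m) (e m) = G m \<inter> {x. e m \<bullet> x = e m \<bullet> x0}"
        using x0 unfolding max_face_def by (auto intro: antisym)
      have "G (m-1) face_of G m" using Gm eq face_of_Int_supporting_hyperplane_le[OF cvx, of "e m" "e m \<bullet> x0"] x0 by auto
      then have "G (m-1) face_of P" using face_of_trans IH by blast
      moreover have "G (m-1) \<noteq> {}" using Gm eq x0 by auto
      moreover have "n - Suc d = m - 1" by (simp add: m_def)
      ultimately show ?case by simp
    qed
  qed
  have G0face: "G 0 face_of P" "G 0 \<noteq> {}" using faces[rule_format, of n] by auto
  have chain: "\<forall>i\<le>n. G 0 \<subseteq> G i"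
  proof (intro allI impI)
    fix i assume "i \<le> n" thus "G 0 \<subseteq> G i"
    proof (induction i)
      case 0 thus ?case by simp
    next
      case (Suc i)
      have "G i = max_face (G (Suc i)) (e (Suc i))" using G7[of "Suc i"] Suc.prems by simp
      hence "G i \<subseteq> G (Suc i)" by (auto simp: max_face_def)
      thus ?case using Suc by auto
    qed
  qed
  have maxG: "\<And>j x y. j \<in> {1..n} \<Longrightarrow> x \<in> G 0 \<Longrightarrow> y \<in> G j \<Longrightarrow> e j \<bullet> y \<le> e j \<bullet> x"
  proof -
    fix j x y assume j: "j \<in> {1..n}" and x: "x \<in> G 0" and y: "y \<in> G j"
    have "j - 1 \<le> n" using j by auto
    hence "x \<in> G (j-1)" using chain x by blast
    thus "e j \<bullet> y \<le> e j \<bullet> x" using G7[OF j] y by (auto simp: max_face_def)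
  qed
  have G0sub: "\<And>j. j\<in>{1..n} \<Longrightarrow> G 0 \<subseteq> G j" using chain by auto
  have single: "\<And>x y. x \<in> G 0 \<Longrightarrow> y \<in> G 0 \<Longrightarrow> x = y"
  proof -
    fix x y assume x: "x \<in> G 0" and y: "y \<in> G 0"
    show "x = y" unfolding vec_eq_iff
    proof
      fix i
      have "e (f i) \<bullet> x = e (f i) \<bullet> y"
        using maxG[of "f i" x y] maxG[of "f i" y x] fi G0sub x y by force
      thus "x $ i = y $ i" using einner snz by (simp add: sgn_0_0)
    qed
  qed
  obtain v where Gv: "G 0 = {v}" using G0face single by blast
  have vext: "v extreme_point_of P" using G0face(1) Gv face_of_singleton by auto
  have ints: "\<And>u i. u extreme_point_of P \<Longrightarrow> u $ i \<in> \<int>"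
    using assms(1) by (auto simp: lattice_polytope_def)
  have inP: "\<And>u. u extreme_point_of P \<Longrightarrow> u \<in> P" by (simp add: extreme_point_of_def)
  have k0: "k \<ge> 0" using assms(2,3) by fastforce
  have reidx: "\<And>y. x_sigma \<alpha> \<sigma> \<bullet> y = (\<Sum>l=1..n. \<alpha>^l * (e l \<bullet> y))"
  proof -
    fix y
    have "x_sigma \<alpha> \<sigma> \<bullet> y = (\<Sum>i\<in>UNIV. \<alpha>^(f i) * (e (f i) \<bullet> y))"
      unfolding inner_vec_def[of "x_sigma \<alpha> \<sigma>"] einner
      by (simp add: x_sigma_def f_def algebra_simps)
    also have "\<dots> = (\<Sum>l=1..n. \<alpha>^l * (e l \<bullet> y))"
      using sum.reindex_bij_betw[OF bij, of "\<lambda>l. \<alpha>^l * (e l \<bullet> y)"] by simp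
    finally show "x_sigma \<alpha> \<sigma> \<bullet> y = (\<Sum>l=1..n. \<alpha>^l * (e l \<bullet> y))" .
  qed
  have key: "\<And>u. u extreme_point_of P \<Longrightarrow> u \<noteq> v \<Longrightarrow> x_sigma \<alpha> \<sigma> \<bullet> u < x_sigma \<alpha> \<sigma> \<bullet> v"
  proof -
    fix u assume uext: "u extreme_point_of P" and uv: "u \<noteq> v"
    define D where "D = {j\<in>{1..n}. e j \<bullet> u \<noteq> e j \<bullet> v}"
    obtain i where "u $ i \<noteq> v $ i" using uv by (auto simp: vec_eq_iff)
    hence "f i \<in> D" using fi einner snz by (simp add: D_def sgn_0_0)
    hence DD: "D \<noteq> {}" "finite D" by (auto simp: D_def)
    define j where "j = Max D"
    have jD: "j \<in> D" using DD by (simp add: j_def)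
    have jmax: "\<And>l. l \<in> D \<Longrightarrow> l \<le> j" using DD by (simp add: j_def)
    have j1: "j \<in> {1..n}" using jD by (simp add: D_def)
    have uG: "\<forall>d. d \<le> n - j \<longrightarrow> u \<in> G (n-d)"
    proof (intro allI impI)
      fix d assume "d \<le> n - j" thus "u \<in> G (n-d)"
      proof (induction d)
        case 0 thus ?case using assms(6) inP uext by (simp add: n_def)
      next
        case (Suc d)
        define m where "m = n - d"
        have m1: "m \<in> {1..n}" "m > j" using Suc.prems j1 by (auto simp: m_def)
        have um: "u \<in> G m" using Suc by (simp add: m_def)
        have "m \<notin> D" using jmax m1 by force
        hence eq: "e m \<bullet> u = e m \<bullet> v" using m1 by (simp add: D_def)
        have "\<forall>y\<in>G m. e m \<bullet> y \<le> e m \<bullet> u" using maxG[OF m1(1)] Gv eq by auto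
        hence "u \<in> G (m-1)" using G7[OF m1(1)] um by (simp add: max_face_def)
        moreover have "n - Suc d = m - 1" by (simp add: m_def)
        ultimately show ?case by simp
      qed
    qed
    have "u \<in> G j" using uG[rule_format, of "n-j"] j1 by auto
    hence lt: "e j \<bullet> u < e j \<bullet> v" using maxG[OF j1, of v u] Gv jD by (auto simp: D_def)
    define g where "g l = e l \<bullet> v - e l \<bullet> u" for l
    have gform: "\<And>i. g (f i) = of_int (sgn (\<sigma> i)) * (v $ i - u $ i)"
      by (simp add: g_def einner algebra_simps)
    have gj: "g j \<ge> 1"
    proof -
      obtain i where i: "f i = j" using surjf j1 by blast
      have "g j \<in> \<int>" using gform[of i] i ints[OF uext] ints[OF vext] by auto
      moreover have "g j > 0" using lt by (simp add: g_def)
      ultimately show ?thesis by (metis Ints_cases of_int_0_less_iff of_int_1_le_iff int_one_le_iff_zero_less)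
    qed
    have gbound: "\<forall>l\<in>{1..<j}. \<bar>g l\<bar> \<le> k"
    proof
      fix l assume "l \<in> {1..<j}"
      then obtain i where i: "f i = l" using surjf j1 by force
      have "0 \<le> u $ i \<and> u $ i \<le> k" "0 \<le> v $ i \<and> v $ i \<le> k" using assms(3) inP[OF uext] inP[OF vext] by blast+
      hence "\<bar>v $ i - u $ i\<bar> \<le> k" by linarith
      thus "\<bar>g l\<bar> \<le> k" using gform[of i] i sabs by (simp add: abs_mult)
    qed
    have gzero: "\<forall>l\<in>{j<..n}. g l = 0"
    proof
      fix l assume l: "l \<in> {j<..n}"
      hence "l \<notin> D" using jmax by force
      thus "g l = 0" using l j1 by (simp add: D_def g_def)
    qed
    have "x_sigma \<alpha> \<sigma> \<bullet> v - x_sigma \<alpha> \<sigma> \<bullet> u = (\<Sum>l=1..n. \<alpha>^l * g l)"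
      by (simp add: reidx g_def sum_subtractf[symmetric] right_diff_distrib)
    also have "\<dots> > 0" using lex_pos[OF k0 assms(5) _ _ gj gbound gzero] j1 by auto
    finally show "x_sigma \<alpha> \<sigma> \<bullet> u < x_sigma \<alpha> \<sigma> \<bullet> v" by simp
  qed
  show ?thesis
  proof (intro exI conjI)
    show "G 0 = {v}" by (rule Gv)
    show "v extreme_point_of P" by (rule vext)
    show "{w. w extreme_point_of P \<and>
               (\<forall>u. u extreme_point_of P \<longrightarrow> x_sigma \<alpha> \<sigma> \<bullet> u \<le> x_sigma \<alpha> \<sigma> \<bullet> w)} = {v}"
    proof (intro equalityI subsetI)
      fix w assume "w \<in> {w. w extreme_point_of P \<and>
               (\<forall>u. u extreme_point_of P \<longrightarrow> x_sigma \<alpha> \<sigma> \<bullet> u \<le> x_sigma \<alpha> \<sigma> \<bullet> w)}"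
      then show "w \<in> {v}" using key vext by force
    next
      fix w assume "w \<in> {v}"
      then show "w \<in> {w. w extreme_point_of P \<and>
               (\<forall>u. u extreme_point_of P \<longrightarrow> x_sigma \<alpha> \<sigma> \<bullet> u \<le> x_sigma \<alpha> \<sigma> \<bullet> w)}"
        using key vext by (force intro: less_imp_le)
    qed
  qed
qed

end
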